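(* Let $Y$ be a mean zero random variable with variance $\sigma^2\in(0,\infty)$ and moment generating function $m(s)=\mathbb{E}[e^{sY}]$, and let $Y^*$, defined on the same probability space, have the $Y$-zero biased distribution. If $Y^*-Y\le c$ almost surely for some $c>0$ and $m(s)$ is finite for all $s\in[0,1/c)$, then for every $\theta\in(0,1/c)$, $$m(\theta)\le \exp\left(\frac{\sigma^2\theta^2}{2(1-\theta c)}\right).$$
   Context: Zero bias distribution: for a mean zero random variable $Y$ with finite positive variance $\sigma^2$, a random variable $Y^*$ is said to have the $Y$-zero biased distribution if $\mathbb{E}[Yf(Y)]=\sigma^2\mathbb{E}[f'(Y^* )]$ for all absolutely continuous functions $f$ for which the expectation of either side exists. *)

theory Defs
  imports "HOL-Probability.Probability"
begin

definition abs_cont_on_interval :: "(real \<Rightarrow> real) \<Rightarrow> real \<Rightarrow> real \<Rightarrow> bool" where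
  "abs_cont_on_interval f a b \<longleftrightarrow>
     (\<forall>\<epsilon>>0. \<exists>\<delta>>0. \<forall>(n::nat) (l::nat \<Rightarrow> real) (r::nat \<Rightarrow> real).
        (\<forall>i<n. a \<le> l i \<and> l i \<le> r i \<and> r i \<le> b) \<and>
        (\<forall>i<n. \<forall>j<n. i \<noteq> j \<longrightarrow> r i \<le> l j \<or> r j \<le> l i) \<and>
        (\<Sum>i<n. r i - l i) < \<delta>
        \<longrightarrow> (\<Sum>i<n. \<bar>f (r i) - f (l i)\<bar>) < \<epsilon>)"

definition abs_cont_fun :: "(real \<Rightarrow> real) \<Rightarrow> bool" where
  "abs_cont_fun f \<longleftrightarrow> (\<forall>a b. a \<le> b \<longrightarrow> abs_cont_on_interval f a b)"

text \<open>Ystar has the Y-zero biased distribution (sigma2 = variance of Y):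
  for every absolutely continuous f and every version f' of its (a.e.) derivative,
  whenever the expectations exist, E[Y f(Y)] = sigma2 * E[f'(Ystar)].\<close>
definition zero_biased :: "'a measure \<Rightarrow> ('a \<Rightarrow> real) \<Rightarrow> ('a \<Rightarrow> real) \<Rightarrow> real \<Rightarrow> bool" where
  "zero_biased M Y Ystar sigma2 \<longleftrightarrow>
     (\<forall>f f'. abs_cont_fun f \<and> (AE x in lborel. (f has_real_derivative f' x) (at x)) \<and>
        integrable M (\<lambda>\<omega>. Y \<omega> * f (Y \<omega>)) \<and> integrable M (\<lambda>\<omega>. f' (Ystar \<omega>))
        \<longrightarrow> (\<integral>\<omega>. Y \<omega> * f (Y \<omega>) \<partial>M) = sigma2 * (\<integral>\<omega>. f' (Ystar \<omega>) \<partial>M))"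

end

theory Submission
  imports Defs
begin

lemma exp_diff_le: fixes u v :: real assumes "u \<le> v" shows "exp v - exp u \<le> (v - u) * exp v"
proof -
  have "1 + (u - v) \<le> exp (u - v)" by (rule exp_ge_add_one_self)
  hence "exp v * (1 + (u - v)) \<le> exp v * exp (u - v)" by simp
  also have "\<dots> = exp u" by (simp add: exp_diff)
  finally show ?thesis by (simp add: algebra_simps)
qed

lemma abs_cont_lip:
  fixes f :: "real \<Rightarrow> real"
  assumes L: "L \<ge> 0" and lip: "\<And>x y. a \<le> x \<Longrightarrow> x \<le> y \<Longrightarrow> y \<le> b \<Longrightarrow> \<bar>f y - f x\<bar> \<le> L * (y - x)"
  shows "abs_cont_on_interval f a b"
  unfolding abs_cont_on_interval_def
proof (intro allI impI)
  fix \<epsilon> :: real assume e: "\<epsilon> > 0"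
  show "\<exists>\<delta>>0. \<forall>(n::nat) l r. (\<forall>i<n. a \<le> l i \<and> l i \<le> r i \<and> r i \<le> b) \<and>
        (\<forall>i<n. \<forall>j<n. i \<noteq> j \<longrightarrow> r i \<le> l j \<or> r j \<le> l i) \<and>
        (\<Sum>i<n. r i - l i) < \<delta> \<longrightarrow> (\<Sum>i<n. \<bar>f (r i) - f (l i)\<bar>) < \<epsilon>"
  proof (intro exI[of _ "\<epsilon> / (L + 1)"] conjI allI impI)
    show "\<epsilon> / (L + 1) > 0" using e L by simp
    fix n :: nat and l r :: "nat \<Rightarrow> real"
    assume h: "(\<forall>i<n. a \<le> l i \<and> l i \<le> r i \<and> r i \<le> b) \<and>
        (\<forall>i<n. \<forall>j<n. i \<noteq> j \<longrightarrow> r i \<le> l j \<or> r j \<le> l i) \<and>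
        (\<Sum>i<n. r i - l i) < \<epsilon> / (L + 1)"
    have "(\<Sum>i<n. \<bar>f (r i) - f (l i)\<bar>) \<le> (\<Sum>i<n. L * (r i - l i))"
      using h by (intro sum_mono lip) auto
    also have "\<dots> = L * (\<Sum>i<n. r i - l i)" by (simp add: sum_distrib_left)
    also have "\<dots> \<le> L * (\<epsilon> / (L + 1))" using h L by (intro mult_left_mono) auto
    also have "\<dots> < \<epsilon>" using L e by (simp add: field_simps)
    finally show "(\<Sum>i<n. \<bar>f (r i) - f (l i)\<bar>) < \<epsilon>" .
  qed
qed

lemma abs_cont_exp: "abs_cont_fun (\<lambda>y. exp (s * y))"
  unfolding abs_cont_fun_def
proof (intro allI impI)
  fix a b :: real assume "a \<le> b"
  define B where "B = max \<bar>a\<bar> \<bar>b\<bar>"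
  show "abs_cont_on_interval (\<lambda>y. exp (s * y)) a b"
  proof (rule abs_cont_lip[of "\<bar>s\<bar> * exp (\<bar>s\<bar> * B)"])
    show "0 \<le> \<bar>s\<bar> * exp (\<bar>s\<bar> * B)" by simp
    fix x y assume xy: "a \<le> x" "x \<le> y" "y \<le> b"
    have bx: "\<bar>s * x\<bar> \<le> \<bar>s\<bar> * B" "\<bar>s * y\<bar> \<le> \<bar>s\<bar> * B"
      using xy unfolding B_def by (auto simp: abs_mult intro!: mult_left_mono)
    have key: "\<bar>exp v - exp u\<bar> \<le> \<bar>v - u\<bar> * exp (\<bar>s\<bar> * B)"
      if "\<bar>u\<bar> \<le> \<bar>s\<bar> * B" "\<bar>v\<bar> \<le> \<bar>s\<bar> * B" for u v :: real
    proof (cases "u \<le> v")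
      case True
      have "exp v - exp u \<le> (v - u) * exp v" by (rule exp_diff_le[OF True])
      also have "\<dots> \<le> (v - u) * exp (\<bar>s\<bar> * B)" using True that by (intro mult_left_mono) auto
      finally show ?thesis using True by auto
    next
      case False
      have "exp u - exp v \<le> (u - v) * exp u" by (rule exp_diff_le) (use False in auto)
      also have "\<dots> \<le> (u - v) * exp (\<bar>s\<bar> * B)" using False that by (intro mult_left_mono) auto
      finally show ?thesis using False by auto
    qed
    have "\<bar>exp (s * y) - exp (s * x)\<bar> \<le> \<bar>s * y - s * x\<bar> * exp (\<bar>s\<bar> * B)"
      using key bx by blast
    also have "\<bar>s * y - s * x\<bar> = \<bar>s\<bar> * (y - x)" using xy by (simp add: abs_mult right_diff_distrib[symmetric])
    finally show "\<bar>exp (s * y) - exp (s * x)\<bar> \<le> \<bar>s\<bar> * exp (\<bar>s\<bar> * B) * (y - x)" by (simp add: mult_ac)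
  qed
qed

lemma zexp_bound:
  fixes z t b :: real assumes "0 < t" "t < b"
  shows "\<bar>z * exp (t * z)\<bar> \<le> 1 / t + exp (b * z) / (b - t)"
proof (cases "z \<ge> 0")
  case True
  have "(b - t) * z \<le> exp ((b - t) * z)" using exp_ge_add_one_self[of "(b-t)*z"] by linarith
  hence "(b - t) * z * exp (t * z) \<le> exp ((b - t) * z) * exp (t * z)" by (intro mult_right_mono) auto
  also have "\<dots> = exp (b * z)" by (simp add: exp_add[symmetric] algebra_simps)
  finally have "z * exp (t * z) \<le> exp (b * z) / (b - t)" using assms by (simp add: field_simps)
  moreover have "0 \<le> 1 / t" using assms by simp
  ultimately show ?thesis using True by (smt (verit) exp_gt_zero mult_nonneg_nonneg)
next
  case False
  have "t * (-z) \<le> exp (t * (-z))" using exp_ge_add_one_self[of "t*(-z)"] by linarith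
  hence "t * (-z) * exp (t * z) \<le> exp (t * (-z)) * exp (t * z)" by (intro mult_right_mono) auto
  also have "\<dots> = 1" by (simp add: exp_add[symmetric])
  finally have "(-z) * exp (t * z) \<le> 1 / t" using assms by (simp add: field_simps)
  moreover have "0 \<le> exp (b * z) / (b - t)" using assms by simp
  ultimately show ?thesis using False by (simp add: abs_mult)
qed

lemma exp_dom:
  fixes z t b :: real assumes "0 \<le> t" "t \<le> b"
  shows "exp (t * z) \<le> 1 + exp (b * z)"
proof (cases "z \<ge> 0")
  case True then have "exp (t * z) \<le> exp (b * z)" using assms by (simp add: mult_right_mono)
  then show ?thesis by (smt (verit))
next
  case False then have "exp (t * z) \<le> 1" using assms by (simp add: mult_nonneg_nonpos)
  then show ?thesis by (smt (verit) exp_gt_zero)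
qed

lemma cont_int_exp:
  fixes Z :: "'a \<Rightarrow> real" and b :: real
  assumes "prob_space M" "Z \<in> borel_measurable M" "integrable M (\<lambda>\<omega>. exp (b * Z \<omega>))"
  shows "continuous_on {0..b} (\<lambda>t. \<integral>\<omega>. exp (t * Z \<omega>) \<partial>M)"
proof (rule continuous_on_sequentiallyI)
  interpret P: prob_space M by fact
  fix u :: "nat \<Rightarrow> real" and a assume u: "\<forall>n. u n \<in> {0..b}" "a \<in> {0..b}" "u \<longlonglongrightarrow> a"
  show "(\<lambda>n. \<integral>\<omega>. exp (u n * Z \<omega>) \<partial>M) \<longlonglongrightarrow> \<integral>\<omega>. exp (a * Z \<omega>) \<partial>M"
  proof (rule integral_dominated_convergence[where w = "\<lambda>\<omega>. 1 + exp (b * Z \<omega>)"])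
    show "integrable M (\<lambda>\<omega>. 1 + exp (b * Z \<omega>))" using assms(3) by simp
    show "(\<lambda>\<omega>. exp (a * Z \<omega>)) \<in> borel_measurable M" using assms(2) by measurable
    show "(\<lambda>\<omega>. exp (u n * Z \<omega>)) \<in> borel_measurable M" for n using assms(2) by measurable
    show "AE \<omega> in M. (\<lambda>n. exp (u n * Z \<omega>)) \<longlonglongrightarrow> exp (a * Z \<omega>)"
      using u(3) by (auto intro!: tendsto_intros)
    show "AE \<omega> in M. norm (exp (u n * Z \<omega>)) \<le> 1 + exp (b * Z \<omega>)" for n
      using u(1) exp_dom[of "u n" b] by auto
  qed
qed

theorem mainTheorem4:
  fixes M :: "'a measure" and Y Ystar :: "'a \<Rightarrow> real" and \<sigma> c \<theta> :: real
  assumes "prob_space M"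
    and "Y \<in> borel_measurable M" and "Ystar \<in> borel_measurable M"
    and "integrable M Y" and "prob_space.expectation M Y = 0"
    and "integrable M (\<lambda>\<omega>. (Y \<omega>)\<^sup>2)"
    and "\<sigma> > 0" and "prob_space.variance M Y = \<sigma>\<^sup>2"
    and "zero_biased M Y Ystar (\<sigma>\<^sup>2)"
    and "c > 0" and "AE \<omega> in M. Ystar \<omega> - Y \<omega> \<le> c"
    and "\<forall>s. 0 \<le> s \<and> s < 1 / c \<longrightarrow> integrable M (\<lambda>\<omega>. exp (s * Y \<omega>))"
    and "0 < \<theta>" and "\<theta> < 1 / c"
  shows "prob_space.expectation M (\<lambda>\<omega>. exp (\<theta> * Y \<omega>))
           \<le> exp (\<sigma>\<^sup>2 * \<theta>\<^sup>2 / (2 * (1 - \<theta> * c)))"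
proof -
  note A = assms
  interpret P: prob_space M by fact
  define b1 where "b1 = (\<theta> + 1/c)/2"
  define b2 where "b2 = (b1 + 1/c)/2"
  have b: "\<theta> < b1" "b1 < b2" "b2 < 1/c" using A(14) unfolding b1_def b2_def by (auto simp: field_simps)
  have intY: "integrable M (\<lambda>\<omega>. exp (t * Y \<omega>))" if "0 \<le> t" "t \<le> b2" for t
    using A(12) that b by auto
  have intYs: "integrable M (\<lambda>\<omega>. exp (t * Ystar \<omega>))" if "0 \<le> t" "t \<le> b2" for t
  proof (rule Bochner_Integration.integrable_bound)
    show "integrable M (\<lambda>\<omega>. exp (t * c) * exp (t * Y \<omega>))" using intY[OF that] by simp
    show "(\<lambda>\<omega>. exp (t * Ystar \<omega>)) \<in> borel_measurable M" using A(3) by measurable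
    show "AE \<omega> in M. norm (exp (t * Ystar \<omega>)) \<le> norm (exp (t * c) * exp (t * Y \<omega>))"
      using A(11)
    proof eventually_elim
      fix \<omega> assume "Ystar \<omega> - Y \<omega> \<le> c"
      hence "t * Ystar \<omega> \<le> t * c + t * Y \<omega>" using that(1)
        by (metis add.commute diff_le_eq distrib_left mult_left_mono)
      thus "norm (exp (t * Ystar \<omega>)) \<le> norm (exp (t * c) * exp (t * Y \<omega>))"
        by (simp add: exp_add[symmetric])
    qed
  qed
  have intD: "integrable M (\<lambda>\<omega>. Y \<omega> * exp (t * Y \<omega>))" if "0 \<le> t" "t \<le> b1" for t
  proof (cases "t = 0")
    case True then show ?thesis using A(4) by simp
  next
    case False
    hence t: "0 < t" "t < b2" using that b by auto
    show ?thesis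
    proof (rule Bochner_Integration.integrable_bound)
      show "integrable M (\<lambda>\<omega>. 1 / t + exp (b2 * Y \<omega>) / (b2 - t))"
        using intY[of b2] b t by simp
      show "(\<lambda>\<omega>. Y \<omega> * exp (t * Y \<omega>)) \<in> borel_measurable M" using A(2) by measurable
      show "AE \<omega> in M. norm (Y \<omega> * exp (t * Y \<omega>)) \<le> norm (1 / t + exp (b2 * Y \<omega>) / (b2 - t))"
        using zexp_bound[OF t] t by (auto intro: order_trans[OF _ abs_ge_self])
    qed
  qed
  define m where "m t = (\<integral>\<omega>. exp (t * Y \<omega>) \<partial>M)" for t
  define E where "E t = (\<integral>\<omega>. exp (t * Ystar \<omega>) \<partial>M)" for t
  define D where "D t = (\<integral>\<omega>. Y \<omega> * exp (t * Y \<omega>) \<partial>M)" for t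
  have zb: "D t = \<sigma>\<^sup>2 * (t * E t)" if "0 \<le> t" "t \<le> b1" for t
  proof -
    have der: "AE x in lborel. ((\<lambda>y. exp (t * y)) has_real_derivative t * exp (t * x)) (at x)"
      by (auto intro!: derivative_eq_intros)
    have "(\<integral>\<omega>. Y \<omega> * exp (t * Y \<omega>) \<partial>M) = \<sigma>\<^sup>2 * (\<integral>\<omega>. t * exp (t * Ystar \<omega>) \<partial>M)"
      using A(9)[unfolded zero_biased_def, rule_format, of "\<lambda>y. exp (t * y)" "\<lambda>x. t * exp (t * x)"]
        abs_cont_exp der intD[OF that] intYs[of t] that b by auto
    thus ?thesis unfolding D_def E_def by simp
  qed
  have Ebound: "E t \<le> m t / (1 - t * c)" if "0 \<le> t" "t \<le> b1" for t
  proof -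
    have "t * c \<le> b2 * c" using that b A(10) by (intro mult_right_mono) auto
    moreover have "b2 * c < 1" using b A(10) by (simp add: field_simps)
    ultimately have tc: "t * c < 1" by linarith
    have "E t \<le> (\<integral>\<omega>. exp (t * c) * exp (t * Y \<omega>) \<partial>M)"
      unfolding E_def
    proof (rule integral_mono_AE)
      show "integrable M (\<lambda>\<omega>. exp (t * Ystar \<omega>))" using intYs that b by auto
      show "integrable M (\<lambda>\<omega>. exp (t * c) * exp (t * Y \<omega>))" using intY that b by auto
      show "AE \<omega> in M. exp (t * Ystar \<omega>) \<le> exp (t * c) * exp (t * Y \<omega>)"
        using A(11)
      proof eventually_elim
        fix \<omega> assume "Ystar \<omega> - Y \<omega> \<le> c"
        hence "t * Ystar \<omega> \<le> t * c + t * Y \<omega>" using that(1)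
          by (metis add.commute diff_le_eq distrib_left mult_left_mono)
        thus "exp (t * Ystar \<omega>) \<le> exp (t * c) * exp (t * Y \<omega>)"
          by (simp add: exp_add[symmetric])
      qed
    qed
    also have "\<dots> = exp (t * c) * m t" unfolding m_def by simp
    also have "\<dots> \<le> m t / (1 - t * c)"
    proof -
      have "1 - t * c \<le> exp (- (t * c))" using exp_ge_add_one_self[of "- (t*c)"] by simp
      hence "exp (t * c) * (1 - t * c) \<le> 1"
        using mult_left_mono[of "1 - t*c" "exp (-(t*c))" "exp (t*c)"] by (simp add: exp_minus)
      moreover have "m t \<ge> 0" unfolding m_def by simp
      ultimately have "exp (t * c) * m t * (1 - t * c) \<le> m t"
        using mult_right_mono[of "exp (t * c) * (1 - t * c)" 1 "m t"] by (simp add: mult_ac)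
      thus ?thesis using tc by (simp add: field_simps)
    qed
    finally show ?thesis .
  qed
  have conv: "m s \<ge> m t + (s - t) * D t" if "0 \<le> s" "s \<le> b1" "0 \<le> t" "t \<le> b1" for s t
  proof -
    have "(\<integral>\<omega>. exp (t * Y \<omega>) + (s - t) * (Y \<omega> * exp (t * Y \<omega>)) \<partial>M) \<le> m s"
      unfolding m_def
    proof (rule integral_mono)
      show "integrable M (\<lambda>\<omega>. exp (t * Y \<omega>) + (s - t) * (Y \<omega> * exp (t * Y \<omega>)))"
        using intY intD that b by auto
      show "integrable M (\<lambda>\<omega>. exp (s * Y \<omega>))" using intY that b by auto
      fix \<omega>
      have "1 + (s - t) * Y \<omega> \<le> exp ((s - t) * Y \<omega>)" by (rule exp_ge_add_one_self)
      hence "exp (t * Y \<omega>) * (1 + (s - t) * Y \<omega>) \<le> exp (t * Y \<omega>) * exp ((s - t) * Y \<omega>)" by simp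
      also have "\<dots> = exp (s * Y \<omega>)" by (simp add: exp_add[symmetric] algebra_simps)
      finally show "exp (t * Y \<omega>) + (s - t) * (Y \<omega> * exp (t * Y \<omega>)) \<le> exp (s * Y \<omega>)"
        by (simp add: algebra_simps)
    qed
    moreover have "(\<integral>\<omega>. exp (t * Y \<omega>) + (s - t) * (Y \<omega> * exp (t * Y \<omega>)) \<partial>M) = m t + (s - t) * D t"
      unfolding m_def D_def using intY intD that b by simp
    ultimately show ?thesis by simp
  qed
  have contm: "continuous_on {0..b1} m"
    unfolding m_def using cont_int_exp[OF A(1) A(2) intY[of b1]] b A(13) by simp
  have contE: "continuous_on {0..b1} E"
    unfolding E_def using cont_int_exp[OF A(1) A(3) intYs[of b1]] b A(13) by simp
  define g where "g t = \<sigma>\<^sup>2 * (t * E t)" for t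
  have deriv: "(m has_real_derivative g t) (at t)" if t: "0 < t" "t < b1" for t
  proof -
    have "isCont E t" using continuous_on_interior[OF contE] t by simp
    hence gc: "((\<lambda>s. g s - g t) \<longlongrightarrow> 0) (at t)" unfolding g_def
      by (auto intro!: tendsto_eq_intros simp: isCont_def LIM_zero_iff)
    have ev: "\<forall>\<^sub>F s in at t. s \<in> {0<..<b1}"
      using t by (intro eventually_at_in_open') auto
    have "((\<lambda>s. (m s - m t) / (s - t) - g t) \<longlongrightarrow> 0) (at t)"
    proof (rule Lim_null_comparison[OF _ tendsto_norm_zero[OF gc]])
      show "\<forall>\<^sub>F s in at t. norm ((m s - m t) / (s - t) - g t) \<le> norm (g s - g t)"
        using ev eventually_at_filter[of "\<lambda>s. s \<noteq> t" t UNIV]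
      proof -
        have "norm ((m s - m t) / (s - t) - g t) \<le> norm (g s - g t)" if s: "s \<in> {0<..<b1}" "s \<noteq> t" for s
        proof -
          have c1: "m s \<ge> m t + (s - t) * g t" using conv[of s t] zb[of t] s t unfolding g_def by auto
          have c2: "m t \<ge> m s + (t - s) * g s" using conv[of t s] zb[of s] s t unfolding g_def by auto
          show ?thesis
          proof (cases "s > t")
            case True
            have "g t \<le> (m s - m t) / (s - t)" using c1 True by (simp add: field_simps)
            moreover have "(m s - m t) / (s - t) \<le> g s" using c2 True by (simp add: field_simps)
            ultimately show ?thesis by simp
          next
            case False
            hence st: "s < t" using s by simp
            have "(m s - m t) / (s - t) \<le> g t" using c1 st by (simp add: field_simps)
            moreover have "g s \<le> (m s - m t) / (s - t)" using c2 st by (simp add: field_simps)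
            ultimately show ?thesis by simp
          qed
        qed
        moreover have "\<forall>\<^sub>F s in at t. s \<noteq> t" by (simp add: eventually_at_filter)
        ultimately show ?thesis using ev by (auto elim: eventually_mono[OF eventually_conj])
      qed
    qed
    thus ?thesis by (simp add: has_field_derivative_iff LIM_zero_iff)
  qed
  define \<phi> where "\<phi> s = \<sigma>\<^sup>2 * s\<^sup>2 / (2 * (1 - s * c))" for s
  define \<phi>' where "\<phi>' s = \<sigma>\<^sup>2 * s * (2 - s * c) / (2 * (1 - s * c)\<^sup>2)" for s
  have nz: "1 - s * c > 0" if "s \<le> b1" for s
  proof -
    have "s * c \<le> b2 * c" using that b A(10) by (intro mult_right_mono) auto
    moreover have "b2 * c < 1" using b A(10) by (simp add: field_simps)
    ultimately show ?thesis by linarith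
  qed
  have dphi: "(\<phi> has_real_derivative \<phi>' s) (at s)" if "s \<le> b1" for s
  proof -
    have "(\<phi> has_real_derivative (\<sigma>\<^sup>2 * (2 * s) * (2 * (1 - s * c)) - \<sigma>\<^sup>2 * s\<^sup>2 * (2 * (0 - c))) / (2 * (1 - s * c))\<^sup>2) (at s)"
      unfolding \<phi>_def using nz[OF that]
      by (auto intro!: derivative_eq_intros simp: power2_eq_square)
    moreover have "(\<sigma>\<^sup>2 * (2 * s) * (2 * (1 - s * c)) - \<sigma>\<^sup>2 * s\<^sup>2 * (2 * (0 - c))) / (2 * (1 - s * c))\<^sup>2 = \<phi>' s"
    proof -
      have d: "1 - s * c \<noteq> 0" using nz[OF that] by simp
      have e: "(2 * (1 - s * c))\<^sup>2 = 2 * (2 * (1 - s * c)\<^sup>2)" by (simp add: power2_eq_square algebra_simps)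
      have f: "\<sigma>\<^sup>2 * (2 * s) * (2 * (1 - s * c)) - \<sigma>\<^sup>2 * s\<^sup>2 * (2 * (0 - c)) = 2 * (\<sigma>\<^sup>2 * s * (2 - s * c))"
        by (simp add: algebra_simps power2_eq_square)
      show ?thesis unfolding \<phi>'_def e f using d by simp
    qed
    ultimately show ?thesis by simp
  qed
  define \<psi> where "\<psi> s = m s * exp (- \<phi> s)" for s
  have "\<psi> \<theta> \<le> \<psi> 0"
  proof (rule DERIV_nonpos_imp_decreasing_open[of 0 \<theta>])
    show "0 \<le> \<theta>" using A(13) by simp
    fix x assume x: "0 < x" "x < \<theta>"
    have xb: "x < b1" "x \<le> b1" using x b by auto
    have "(\<psi> has_real_derivative g x * exp (- \<phi> x) + m x * (exp (- \<phi> x) * (- \<phi>' x))) (at x)"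
      unfolding \<psi>_def using deriv[OF x(1) xb(1)] dphi[OF xb(2)]
      by (auto intro!: derivative_eq_intros simp: algebra_simps)
    moreover have "g x * exp (- \<phi> x) + m x * (exp (- \<phi> x) * (- \<phi>' x)) \<le> 0"
    proof -
      have "g x \<le> \<sigma>\<^sup>2 * (x * (m x / (1 - x * c)))"
        unfolding g_def using Ebound[of x] x xb by (intro mult_left_mono) auto
      also have "\<dots> \<le> m x * \<phi>' x"
      proof -
        have mx: "m x \<ge> 0" unfolding m_def by simp
        have "1 / (1 - x * c) \<le> (2 - x * c) / (2 * (1 - x * c)\<^sup>2)"
        proof -
          have d: "1 - x * c > 0" using nz[OF xb(2)] .
          have "1 / (1 - x * c) = (2 * (1 - x * c)) / (2 * (1 - x * c)\<^sup>2)"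
          proof -
            have h: "\<And>d::real. d > 0 \<Longrightarrow> 1 / d = (2 * d) / (2 * d\<^sup>2)"
              by (simp add: power2_eq_square)
            show ?thesis by (rule h[OF d])
          qed
          also have "\<dots> \<le> (2 - x * c) / (2 * (1 - x * c)\<^sup>2)"
            using d x A(10) by (intro divide_right_mono) auto
          finally show ?thesis .
        qed
        hence "\<sigma>\<^sup>2 * x * m x * (1 / (1 - x * c)) \<le> \<sigma>\<^sup>2 * x * m x * ((2 - x * c) / (2 * (1 - x * c)\<^sup>2))"
          using mx x by (intro mult_left_mono) auto
        thus ?thesis unfolding \<phi>'_def by (simp add: field_simps)
      qed
      finally have "g x - m x * \<phi>' x \<le> 0" by simp
      hence "exp (- \<phi> x) * (g x - m x * \<phi>' x) \<le> 0" by (simp add: mult_nonneg_nonpos)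
      thus ?thesis by (simp add: algebra_simps)
    qed
    ultimately show "\<exists>y. (\<psi> has_real_derivative y) (at x) \<and> y \<le> 0" by blast
  next
    have "continuous_on {0..\<theta>} m" by (rule continuous_on_subset[OF contm]) (use b in auto)
    moreover have "continuous_on {0..\<theta>} \<phi>"
    proof -
      have "\<forall>s\<in>{0..\<theta>}. 2 * (1 - s * c) \<noteq> 0"
      proof
        fix s assume "s \<in> {0..\<theta>}"
        hence "s \<le> b1" using b by auto
        thus "2 * (1 - s * c) \<noteq> 0" using nz[of s] by simp
      qed
      thus ?thesis unfolding \<phi>_def by (intro continuous_intros) auto
    qed
    ultimately show "continuous_on {0..\<theta>} \<psi>"
      unfolding \<psi>_def by (intro continuous_intros)
  qed
  moreover have "\<psi> 0 = 1" unfolding \<psi>_def m_def \<phi>_def by (simp add: P.prob_space)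
  ultimately have "m \<theta> * exp (- \<phi> \<theta>) \<le> 1" unfolding \<psi>_def by simp
  hence "m \<theta> \<le> exp (\<phi> \<theta>)" by (simp add: exp_minus field_simps)
  thus ?thesis unfolding m_def \<phi>_def by simp
qed

end
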